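(* Let $a<b$, let $N\ge1$ and $T\ge1$. For a probability distribution function $F$ on $[a,b]$ and $y\in[a,b]$ let $\mathrm{CRPS}(F,y)=\int_a^b(F(u)-H(u-y))^2\,du$, where $H(x)=0$ for $x<0$ and $H(x)=1$ for $x\ge0$. Consider the online protocol: set $w_{i,1}=\frac1N$ for $1\le i\le N$; for $t=1,\dots,T$: experts $i=1,\dots,N$ announce probability distribution functions $F_{i,t}$ on $[a,b]$; the learner announces the weighted average $$F_t(u)=\sum_{i=1}^N w^*_{i,t}F_{i,t}(u),\qquad w^*_{i,t}=\frac{w_{i,t}}{\sum_{j=1}^N w_{j,t}};$$ an outcome $y_t\in[a,b]$ is revealed (arbitrarily, possibly adversarially); and the weights are updated by $w_{i,t+1}=w_{i,t}\,e^{-\frac{1}{2(b-a)}\mathrm{CRPS}(F_{i,t},y_t)}$. Then for every $1\le i\le N$, $$\sum_{t=1}^T\mathrm{CRPS}(F_t,y_t)\le\sum_{t=1}^T\mathrm{CRPS}(F_{i,t},y_t)+2(b-a)\ln N.$$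
   Context: A probability distribution function on $[a,b]$ is a non-decreasing function $F:[a,b]\to[0,1]$ with $F(a)=0$, $F(b)=1$, left-continuous and having a right limit at each point. *)

theory Defs
  imports "HOL-Analysis.Analysis"
begin

definition heaviside :: "real \<Rightarrow> real" where
  "heaviside x = (if x < 0 then 0 else 1)"

definition prob_dist_fun :: "real \<Rightarrow> real \<Rightarrow> (real \<Rightarrow> real) \<Rightarrow> bool" where
  "prob_dist_fun a b F \<longleftrightarrow>
     mono_on {a..b} F \<and>
     (\<forall>u\<in>{a..b}. 0 \<le> F u \<and> F u \<le> 1) \<and>
     F a = 0 \<and> F b = 1 \<and>
     (\<forall>u\<in>{a<..b}. (F \<longlongrightarrow> F u) (at u within {a..<u})) \<and>
     (\<forall>u\<in>{a..<b}. \<exists>L. (F \<longlongrightarrow> L) (at u within {u<..b}))"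

definition CRPS :: "real \<Rightarrow> real \<Rightarrow> (real \<Rightarrow> real) \<Rightarrow> real \<Rightarrow> real" where
  "CRPS a b F y = integral {a..b} (\<lambda>u. (F u - heaviside (u - y))\<^sup>2)"

text \<open>Weights w i t (t \<ge> 1) of the online protocol; F i t is the forecast of expert i at
  step t, y t the outcome at step t. Index t = 0 is unused; w i 1 = 1/N.\<close>
fun weight :: "real \<Rightarrow> real \<Rightarrow> nat \<Rightarrow> (nat \<Rightarrow> nat \<Rightarrow> real \<Rightarrow> real) \<Rightarrow> (nat \<Rightarrow> real)
                \<Rightarrow> nat \<Rightarrow> nat \<Rightarrow> real" where
  "weight a b N F y i 0 = 1 / real N"
| "weight a b N F y i (Suc 0) = 1 / real N"
| "weight a b N F y i (Suc (Suc t)) =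
     weight a b N F y i (Suc t) * exp (- (1 / (2 * (b - a))) * CRPS a b (F i (Suc t)) (y (Suc t)))"

definition learner :: "real \<Rightarrow> real \<Rightarrow> nat \<Rightarrow> (nat \<Rightarrow> nat \<Rightarrow> real \<Rightarrow> real) \<Rightarrow> (nat \<Rightarrow> real)
                \<Rightarrow> nat \<Rightarrow> real \<Rightarrow> real" where
  "learner a b N F y t u =
     (\<Sum>i=1..N. (weight a b N F y i t / (\<Sum>j=1..N. weight a b N F y j t)) * F i t u)"

end

theory Submission
  imports Defs
begin

lemma key_real:
  fixes c P Q R :: real
  assumes c: "c > 0" and P: "0 \<le> P" "P \<le> c" and R: "0 \<le> R" "R \<le> c"
    and quad: "\<And>t. 0 \<le> P - 2*t*Q + t^2*R"
  shows "exp (-R/(2*c)) \<le> exp (-P/(2*c)) * (1 - (Q-P)/c)"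
proof -
  have QQ: "Q^2 \<le> P*R"
  proof (cases "R = 0")
    case True
    then have "Q = 0" using quad[of "(P+1)/(2*Q)"] quad[of "-(P+1)/(2*Q)"] P
      by (cases "Q = 0") (auto simp: field_simps)
    then show ?thesis using True by simp
  next
    case False
    then have Rp: "R > 0" using R by simp
    have "0 \<le> P - 2*(Q/R)*Q + (Q/R)^2*R" by (rule quad)
    also have "\<dots> = (P*R - Q^2)/R" using Rp by (simp add: field_simps power2_eq_square)
    finally show ?thesis using Rp by (simp add: zero_le_divide_iff)
  qed
  define et where "et = 1/(2*c)"
  define bt where "bt = Q - P"
  define gm where "gm = P - 2*Q + R"
  have et_pos: "et > 0" using c by (simp add: et_def)
  have g0: "gm \<ge> 0" using quad[of 1] by (simp add: gm_def)
  define q where "q = (\<lambda>x. P + 2*bt * x + gm * x^2)"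
  define d where "d = (\<lambda>x. -et*(2*bt+2*gm * x)*exp(-et*q x))"
  have dq: "DERIV q s :> 2*bt + 2*gm * s" for s
    unfolding q_def by (auto intro!: derivative_eq_intros simp: power2_eq_square)
  have dphi: "DERIV (\<lambda>s. exp(-et*q s)) s :> d s" for s
    unfolding d_def by (rule derivative_eq_intros dq refl | simp)+
  have dd: "DERIV d s :> et*exp(-et*q s)*(et*(2*bt+2*gm * s)^2 - 2*gm)" for s
    unfolding d_def
    by (rule derivative_eq_intros dq refl | simp)+ (simp add: algebra_simps power2_eq_square)
  have ineq: "et*(2*bt+2*gm * s)^2 - 2*gm \<le> 0" if "0 \<le> s" "s \<le> 1" for s
  proof -
    have qs: "q s = (1-s)*P + s*R - s*(1-s)*gm"
      unfolding q_def gm_def bt_def by (simp add: algebra_simps power2_eq_square)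
    have "s*(1-s)*gm \<ge> 0" using that g0 by simp
    moreover have "(1-s)*P + s*R \<le> (1-s)*c + s*c"
      using that P R by (intro add_mono mult_left_mono) auto
    ultimately have qc: "q s \<le> c" using qs by (simp add: algebra_simps)
    have id: "(bt+gm * s)^2 = q s * gm - (P*R - Q^2)"
      unfolding q_def gm_def bt_def by (simp add: algebra_simps power2_eq_square)
    have "(bt+gm * s)^2 \<le> q s * gm" using id QQ by simp
    also have "\<dots> \<le> c*gm" using qc g0 by (simp add: mult_right_mono)
    finally have "(bt+gm * s)^2 \<le> c*gm" .
    then have "(2*bt+2*gm * s)^2 \<le> 4*c*gm"
      by (simp add: power2_eq_square algebra_simps)
    then have "et*(2*bt+2*gm * s)^2 \<le> et*(4*c*gm)" using c by (intro mult_left_mono) (auto simp: et_def)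
    also have "et*(4*c*gm) = 2*gm" using c by (simp add: et_def)
    finally show ?thesis by simp
  qed
  have dmono: "d s \<le> d 0" if "0 \<le> s" "s \<le> 1" for s
  proof (rule DERIV_nonpos_imp_nonincreasing[of 0 s d])
    show "0 \<le> s" by fact
    fix x assume "0 \<le> x" "x \<le> s"
    then show "\<exists>y. DERIV d x :> y \<and> y \<le> 0"
      using that ineq[of x]
      by (intro exI[of _ "et*exp(-et*q x)*(et*(2*bt+2*gm * x)^2 - 2*gm)"] conjI dd)
         (rule mult_nonneg_nonpos, use et_pos in auto)
  qed
  have "exp(-et*q 1) - 1 * d 0 \<le> exp(-et*q 0) - 0 * d 0"
  proof (rule DERIV_nonpos_imp_nonincreasing[of 0 1 "\<lambda>s. exp(-et*q s) - s * d 0"])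
    fix x :: real assume "0 \<le> x" "x \<le> 1"
    then show "\<exists>y. DERIV (\<lambda>s. exp(-et*q s) - s * d 0) x :> y \<and> y \<le> 0"
      using dmono[of x]
      by (intro exI[of _ "d x - 1 * d 0"] conjI DERIV_diff dphi) (auto intro!: derivative_eq_intros)
  qed simp
  moreover have "q 1 = R" "q 0 = P" unfolding q_def bt_def gm_def by simp_all
  moreover have "d 0 = -(Q-P)/c * exp(-P/(2*c))"
    unfolding d_def et_def q_def bt_def using c by (simp add: field_simps)
  ultimately show ?thesis unfolding et_def using c by (simp add: field_simps)
qed

definition good :: "real \<Rightarrow> real \<Rightarrow> (real \<Rightarrow> real) \<Rightarrow> bool" where
  "good a b f \<longleftrightarrow> f \<in> borel_measurable (lebesgue_on {a..b}) \<and> (\<exists>K. \<forall>u\<in>{a..b}. \<bar>f u\<bar> \<le> K)"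

lemma good_add: "good a b f \<Longrightarrow> good a b g \<Longrightarrow> good a b (\<lambda>u. f u + g u)"
  unfolding good_def
proof (elim conjE exE, intro conjI)
  fix K1 K2 assume "\<forall>u\<in>{a..b}. \<bar>f u\<bar> \<le> K1" "\<forall>u\<in>{a..b}. \<bar>g u\<bar> \<le> K2"
  then show "\<exists>K. \<forall>u\<in>{a..b}. \<bar>f u + g u\<bar> \<le> K"
    by (intro exI[of _ "K1+K2"]) (auto intro!: order_trans[OF abs_triangle_ineq] add_mono)
qed auto

lemma good_mult: "good a b f \<Longrightarrow> good a b g \<Longrightarrow> good a b (\<lambda>u. f u * g u)"
  unfolding good_def
proof (elim conjE exE, intro conjI)
  fix K1 K2 assume "\<forall>u\<in>{a..b}. \<bar>f u\<bar> \<le> K1" "\<forall>u\<in>{a..b}. \<bar>g u\<bar> \<le> K2"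
  then show "\<exists>K. \<forall>u\<in>{a..b}. \<bar>f u * g u\<bar> \<le> K"
    by (intro exI[of _ "K1*K2"]) (auto simp: abs_mult intro!: mult_mono)
qed auto

lemma good_const: "good a b (\<lambda>u. c)"
  unfolding good_def by auto

lemma good_diff: "good a b f \<Longrightarrow> good a b g \<Longrightarrow> good a b (\<lambda>u. f u - g u)"
  using good_add[of a b f "\<lambda>u. (-1) * g u"] good_mult[OF good_const[of a b "-1"], of g] by simp

lemma good_sum: "finite I \<Longrightarrow> (\<And>i. i \<in> I \<Longrightarrow> good a b (f i)) \<Longrightarrow> good a b (\<lambda>u. \<Sum>i\<in>I. f i u)"
proof (induction I rule: finite_induct)
  case empty then show ?case using good_const[of a b 0] by simp
next
  case (insert x F)
  then show ?case using good_add[of a b "f x" "\<lambda>u. \<Sum>i\<in>F. f i u"] by simp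
qed

lemma good_integrable: "good a b f \<Longrightarrow> f integrable_on {a..b}"
proof -
  assume g: "good a b f"
  then obtain K where K: "\<forall>u\<in>{a..b}. \<bar>f u\<bar> \<le> K" and m: "f \<in> borel_measurable (lebesgue_on {a..b})"
    unfolding good_def by auto
  have "bounded (f ` {a..b})" using K by (auto simp: bounded_iff)
  then have "(\<lambda>x. f x * 1) absolutely_integrable_on {a..b}"
    by (intro absolutely_integrable_bounded_measurable_product_real m) auto
  then show ?thesis by (simp add: absolutely_integrable_on_def)
qed

lemma good_mono: "mono_on {a..b} f \<Longrightarrow> (\<forall>u\<in>{a..b}. \<bar>f u\<bar> \<le> K) \<Longrightarrow> good a b f"
  unfolding good_def using integrable_mono_on borel_measurable_integrable by blast

lemma good_heaviside: "good a b (\<lambda>u. heaviside (u - z))"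
  by (rule good_mono[where K=1]) (auto simp: mono_on_def heaviside_def)

lemma gram:
  assumes ab: "a < b" and gA: "good a b A" and gB: "good a b B"
    and bA: "\<forall>u\<in>{a..b}. \<bar>A u\<bar> \<le> 1" and bB: "\<forall>u\<in>{a..b}. \<bar>B u\<bar> \<le> 1"
  shows "exp (-(1/(2*(b-a))) * integral {a..b} (\<lambda>u. (B u)^2))
     \<le> exp (-(1/(2*(b-a))) * integral {a..b} (\<lambda>u. (A u)^2)) *
        (1 - (integral {a..b} (\<lambda>u. A u * B u) - integral {a..b} (\<lambda>u. (A u)^2))/(b-a))"
proof -
  define P where "P = integral {a..b} (\<lambda>u. (A u)^2)"
  define Q where "Q = integral {a..b} (\<lambda>u. A u * B u)"
  define R where "R = integral {a..b} (\<lambda>u. (B u)^2)"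
  have iA: "(\<lambda>u. (A u)^2) integrable_on {a..b}"
    using good_integrable[OF good_mult[OF gA gA]] by (simp add: power2_eq_square)
  have iB: "(\<lambda>u. (B u)^2) integrable_on {a..b}"
    using good_integrable[OF good_mult[OF gB gB]] by (simp add: power2_eq_square)
  have iAB: "(\<lambda>u. A u * B u) integrable_on {a..b}"
    using good_integrable[OF good_mult[OF gA gB]] .
  have i1: "integral {a..b} (\<lambda>u. 1::real) = b - a" using ab by simp
  have bnd: "0 \<le> integral {a..b} (\<lambda>u. (f u)^2) \<and> integral {a..b} (\<lambda>u. (f u)^2) \<le> b - a"
    if i: "(\<lambda>u. (f u)^2) integrable_on {a..b}" and bf: "\<forall>u\<in>{a..b}. \<bar>f u\<bar> \<le> 1" for f
  proof
    show "0 \<le> integral {a..b} (\<lambda>u. (f u)^2)" by (rule integral_nonneg[OF i]) simp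
    have "integral {a..b} (\<lambda>u. (f u)^2) \<le> integral {a..b} (\<lambda>u. 1::real)"
    proof (rule integral_le[OF i])
      show "(\<lambda>u. 1::real) integrable_on {a..b}" using integrable_const[of "1::real" a b] by simp
      fix u assume "u \<in> {a..b}"
      then have "\<bar>f u\<bar> \<le> 1" using bf by auto
      then show "(f u)^2 \<le> 1" by (simp add: abs_le_square_iff[of "f u" 1, symmetric] abs_square_le_1)
    qed
    then show "integral {a..b} (\<lambda>u. (f u)^2) \<le> b - a" using i1 by simp
  qed
  have quad: "0 \<le> P - 2*t*Q + t^2*R" for t
  proof -
    have eq: "(\<lambda>u. (A u - t * B u)^2) = (\<lambda>u. ((A u)^2 - (2*t)*(A u * B u)) + t^2*(B u)^2)"
      by (simp add: fun_eq_iff power2_eq_square algebra_simps)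
    have "0 \<le> integral {a..b} (\<lambda>u. (A u - t * B u)^2)"
    proof (rule integral_nonneg)
      have "good a b (\<lambda>u. t * B u)" by (rule good_mult[OF good_const gB])
      then have "good a b (\<lambda>u. A u - t * B u)" by (rule good_diff[OF gA])
      then show "(\<lambda>u. (A u - t * B u)^2) integrable_on {a..b}"
        using good_integrable[OF good_mult] by (simp add: power2_eq_square)
    qed simp
    also have "\<dots> = P - 2*t*Q + t^2*R"
    proof -
      have i2: "(\<lambda>u. (2*t)*(A u * B u)) integrable_on {a..b}" by (rule integrable_on_mult_right[OF iAB])
      have i3: "(\<lambda>u. t^2*(B u)^2) integrable_on {a..b}" by (rule integrable_on_mult_right[OF iB])
      have i4: "(\<lambda>u. (A u)^2 - (2*t)*(A u * B u)) integrable_on {a..b}" by (rule integrable_diff[OF iA i2])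
      show ?thesis unfolding eq P_def Q_def R_def
        by (simp only: integral_add[OF i4 i3] integral_diff[OF iA i2] integral_mult_right)
    qed
    finally show ?thesis .
  qed
  have "exp (-R/(2*(b-a))) \<le> exp (-P/(2*(b-a))) * (1 - (Q-P)/(b-a))"
    by (rule key_real) (use ab bnd[OF iA bA] bnd[OF iB bB] quad in \<open>auto simp: P_def R_def\<close>)
  then show ?thesis unfolding P_def Q_def R_def by simp
qed

lemma mix:
  assumes ab: "a < b" and fin: "finite I" and vnn: "\<And>i. i \<in> I \<Longrightarrow> v i \<ge> 0" and vs: "sum v I = 1"
    and gB: "\<And>i. i \<in> I \<Longrightarrow> good a b (B i)"
    and bB: "\<And>i. i \<in> I \<Longrightarrow> \<forall>u\<in>{a..b}. \<bar>B i u\<bar> \<le> 1"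
    and A: "A = (\<lambda>u. \<Sum>i\<in>I. v i * B i u)"
  shows "(\<Sum>i\<in>I. v i * exp (-(1/(2*(b-a))) * integral {a..b} (\<lambda>u. (B i u)^2)))
     \<le> exp (-(1/(2*(b-a))) * integral {a..b} (\<lambda>u. (A u)^2))"
proof -
  have gA: "good a b A" unfolding A using gB
    by (intro good_sum fin good_mult[OF good_const]) auto
  have bA: "\<forall>u\<in>{a..b}. \<bar>A u\<bar> \<le> 1"
  proof
    fix u assume u: "u \<in> {a..b}"
    have "\<bar>A u\<bar> \<le> (\<Sum>i\<in>I. \<bar>v i * B i u\<bar>)" unfolding A by (rule sum_abs)
    also have "\<dots> \<le> (\<Sum>i\<in>I. v i)"
      using vnn bB u by (intro sum_mono) (auto simp: abs_mult intro!: mult_left_le)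
    finally show "\<bar>A u\<bar> \<le> 1" using vs by simp
  qed
  define P where "P = integral {a..b} (\<lambda>u. (A u)^2)"
  define Q where "Q i = integral {a..b} (\<lambda>u. A u * B i u)" for i
  define e where "e = exp (-(1/(2*(b-a))) * P)"
  have "(\<Sum>i\<in>I. v i * exp (-(1/(2*(b-a))) * integral {a..b} (\<lambda>u. (B i u)^2)))
      \<le> (\<Sum>i\<in>I. v i * (e * (1 - (Q i - P)/(b-a))))"
    using gram[OF ab gA gB bA bB] vnn unfolding e_def P_def Q_def
    by (intro sum_mono mult_left_mono) auto
  also have "\<dots> = e * (\<Sum>i\<in>I. v i) + (e*P/(b-a)) * (\<Sum>i\<in>I. v i) - (e/(b-a)) * (\<Sum>i\<in>I. v i * Q i)"
  proof -
    have pw: "v i * (e * (1 - (Q i - P)/(b-a))) = e * v i + (e*P/(b-a)) * v i - (e/(b-a)) * (v i * Q i)" for i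
    proof -
      have "c \<noteq> 0 \<Longrightarrow> v * (e * (1 - (q - p)/c)) = e * v + (e*p/c) * v - (e/c) * (v * q)" for c v q p :: real
        by (simp add: field_simps)
      then show ?thesis using ab by simp
    qed
    show ?thesis unfolding pw sum_subtractf sum.distrib sum_distrib_left by simp
  qed
  also have "(\<Sum>i\<in>I. v i * Q i) = P"
  proof -
    have "(\<Sum>i\<in>I. v i * Q i) = (\<Sum>i\<in>I. integral {a..b} (\<lambda>u. v i * (A u * B i u)))"
      unfolding Q_def by simp
    also have "\<dots> = integral {a..b} (\<lambda>u. \<Sum>i\<in>I. v i * (A u * B i u))"
      using gB gA by (intro integral_sum[symmetric] fin good_integrable good_mult good_const) auto
    also have "\<dots> = P" unfolding P_def
      by (rule integral_cong) (simp add: A power2_eq_square sum_distrib_left algebra_simps)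
    finally show ?thesis .
  qed
  finally show ?thesis using vs ab unfolding e_def P_def by simp
qed

lemma weight_formula:
  "weight a b N F y i (Suc n) = 1 / real N * exp (-(1/(2*(b-a))) * (\<Sum>t=1..n. CRPS a b (F i t) (y t)))"
proof (induction n)
  case 0 then show ?case by simp
next
  case (Suc n)
  have "weight a b N F y i (Suc (Suc n)) = weight a b N F y i (Suc n) * exp (-(1/(2*(b-a))) * CRPS a b (F i (Suc n)) (y (Suc n)))"
    by simp
  also have "\<dots> = 1 / real N * exp (-(1/(2*(b-a))) * (\<Sum>t=1..n. CRPS a b (F i t) (y t)) + -(1/(2*(b-a))) * CRPS a b (F i (Suc n)) (y (Suc n)))"
    unfolding Suc exp_add by simp
  also have "\<dots> = 1 / real N * exp (-(1/(2*(b-a))) * (\<Sum>t=1..Suc n. CRPS a b (F i t) (y t)))"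
    by (simp add: sum.cl_ivl_Suc algebra_simps)
  finally show ?case .
qed

theorem mainTheorem4:
  fixes a b :: real and N T :: nat
    and F :: "nat \<Rightarrow> nat \<Rightarrow> real \<Rightarrow> real" and y :: "nat \<Rightarrow> real"
  assumes "a < b" and "N \<ge> 1" and "T \<ge> 1"
    and "\<And>i t. 1 \<le> i \<Longrightarrow> i \<le> N \<Longrightarrow> 1 \<le> t \<Longrightarrow> t \<le> T \<Longrightarrow> prob_dist_fun a b (F i t)"
    and "\<And>t. 1 \<le> t \<Longrightarrow> t \<le> T \<Longrightarrow> y t \<in> {a..b}"
  shows "\<forall>i\<in>{1..N}.
           (\<Sum>t=1..T. CRPS a b (learner a b N F y t) (y t))
             \<le> (\<Sum>t=1..T. CRPS a b (F i t) (y t)) + 2 * (b - a) * ln (real N)"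
proof
  note ab = assms(1) and N1 = assms(2) and pdf = assms(4)
  fix i assume i: "i \<in> {1..N}"
  define et where "et = 1/(2*(b-a))"
  have etp: "et > 0" using ab by (simp add: et_def)
  define w where "w j t = weight a b N F y j t" for j t
  define W where "W t = (\<Sum>j=1..N. w j t)" for t
  define L where "L t = CRPS a b (learner a b N F y t) (y t)" for t
  have wpos: "w j t > 0" for j t
  proof (cases t)
    case 0 then show ?thesis using N1 by (simp add: w_def)
  next
    case (Suc n) then show ?thesis using N1 by (simp add: w_def weight_formula)
  qed
  have Wpos: "W t > 0" for t
    unfolding W_def using wpos N1 by (intro sum_pos) auto
  have step: "W (Suc t) \<le> W t * exp (-et * L t)" if t: "1 \<le> t" "t \<le> T" for t
  proof -
    define v where "v j = w j t / W t" for j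
    define B where "B j u = F j t u - heaviside (u - y t)" for j u
    define A where "A = (\<lambda>u. \<Sum>j\<in>{1..N}. v j * B j u)"
    have vs: "sum v {1..N} = 1"
      unfolding v_def sum_divide_distrib[symmetric] W_def[symmetric] using Wpos[of t] by simp
    have lA: "learner a b N F y t u - heaviside (u - y t) = A u" for u
    proof -
      have "A u = (\<Sum>j=1..N. v j * F j t u) - (\<Sum>j=1..N. v j) * heaviside (u - y t)"
        unfolding A_def B_def right_diff_distrib sum_subtractf sum_distrib_right ..
      then show ?thesis using vs unfolding learner_def v_def w_def W_def by simp
    qed
    have pd: "prob_dist_fun a b (F j t)" if "j \<in> {1..N}" for j
      using pdf that t by auto
    have gB: "good a b (B j)" if "j \<in> {1..N}" for j
    proof -
      have "good a b (F j t)"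
        using pd[OF that] by (intro good_mono[where K=1]) (auto simp: prob_dist_fun_def)
      then show ?thesis unfolding B_def by (intro good_diff good_heaviside)
    qed
    have bB: "\<forall>u\<in>{a..b}. \<bar>B j u\<bar> \<le> 1" if "j \<in> {1..N}" for j
      using pd[OF that] unfolding B_def prob_dist_fun_def heaviside_def by auto
    have "(\<Sum>j\<in>{1..N}. v j * exp (-(1/(2*(b-a))) * integral {a..b} (\<lambda>u. (B j u)^2)))
       \<le> exp (-(1/(2*(b-a))) * integral {a..b} (\<lambda>u. (A u)^2))"
      by (rule mix[OF ab _ _ vs gB bB A_def]) (auto simp: v_def intro: less_imp_le wpos Wpos divide_nonneg_pos)
    moreover have "integral {a..b} (\<lambda>u. (A u)^2) = L t"
      unfolding L_def CRPS_def lA[symmetric] ..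
    moreover have "integral {a..b} (\<lambda>u. (B j u)^2) = CRPS a b (F j t) (y t)" for j
      unfolding CRPS_def B_def ..
    moreover have "W (Suc t) = W t * (\<Sum>j\<in>{1..N}. v j * exp (-et * CRPS a b (F j t) (y t)))"
    proof -
      obtain t' where t': "t = Suc t'" using t by (cases t) auto
      have "W (Suc t) = (\<Sum>j=1..N. w j t * exp (-et * CRPS a b (F j t) (y t)))"
        unfolding W_def w_def t' et_def by simp
      also have "\<dots> = W t * (\<Sum>j\<in>{1..N}. v j * exp (-et * CRPS a b (F j t) (y t)))"
        unfolding v_def sum_distrib_left using Wpos[of t] by (intro sum.cong) auto
      finally show ?thesis .
    qed
    ultimately show ?thesis using Wpos[of t] unfolding et_def by (simp add: mult_left_mono)
  qed
  have ind: "n \<le> T \<Longrightarrow> W (Suc n) \<le> exp (-et * (\<Sum>t=1..n. L t))" for n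
  proof (induction n)
    case 0
    have "W (Suc 0) = 1" unfolding W_def w_def using N1 by simp
    then show ?case by simp
  next
    case (Suc n)
    have "W (Suc (Suc n)) \<le> W (Suc n) * exp (-et * L (Suc n))"
      using step[of "Suc n"] Suc.prems by simp
    also have "\<dots> \<le> exp (-et * (\<Sum>t=1..n. L t)) * exp (-et * L (Suc n))"
      using Suc by (intro mult_right_mono) auto
    also have "\<dots> = exp (-et * (\<Sum>t=1..Suc n. L t))"
      by (simp add: sum.cl_ivl_Suc exp_add[symmetric] algebra_simps)
    finally show ?case .
  qed
  define Si where "Si = (\<Sum>t=1..T. CRPS a b (F i t) (y t))"
  define S where "S = (\<Sum>t=1..T. L t)"
  have "w i (Suc T) \<le> W (Suc T)"
    unfolding W_def using i wpos by (intro member_le_sum) (auto intro: less_imp_le)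
  also have "\<dots> \<le> exp (-et * S)" unfolding S_def by (rule ind) simp
  finally have "1 / real N * exp (-et * Si) \<le> exp (-et * S)"
    unfolding w_def weight_formula et_def Si_def .
  then have "exp (-et * Si) \<le> real N * exp (-et * S)" using N1 by (simp add: field_simps)
  also have "\<dots> = exp (ln (real N) + -et * S)" using N1 by (simp only: exp_add) simp
  finally have "-et * Si \<le> ln (real N) + -et * S" by simp
  moreover have e1: "et * (2*(b-a)) = 1" using ab by (simp add: et_def)
  moreover have "et * (Si + 2*(b-a) * ln (real N)) = et * Si + (et * (2*(b-a))) * ln (real N)"
    by (simp add: algebra_simps)
  ultimately have "et * S \<le> et * (Si + 2*(b-a) * ln (real N))"
    by simp
  then have "S \<le> Si + 2*(b-a) * ln (real N)" using etp by simp
  then show "(\<Sum>t=1..T. CRPS a b (learner a b N F y t) (y t))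
             \<le> (\<Sum>t=1..T. CRPS a b (F i t) (y t)) + 2 * (b - a) * ln (real N)"
    unfolding S_def Si_def L_def .
qed

end
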